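(* Let $\mathcal A$ be an NBA and let $R$ be a strict partial order on its states with $R\subseteq\ \subseteq^{\mathrm{di}}$. Then $P(\mathrm{id},R)$ is good for pruning, i.e. $\mathcal L(\mathrm{Prune}(\mathcal A,P(\mathrm{id},R)))=\mathcal L(\mathcal A)$. In particular this holds for $R$ the strict part of direct trace inclusion.
   Context: An NBA is $\mathcal A=(\Sigma,Q,I,F,\delta)$, $\delta\subseteq Q\times\Sigma\times Q$, assumed forward and backward complete. Traces, initial traces (starting in $I$), fair traces (infinite, visiting $F$ infinitely often), and the language (infinite words with an initial fair trace) are as usual. Direct trace inclusion: $p\subseteq^{\mathrm{di}}q$ iff for every infinite word $w=\sigma_0\sigma_1\cdots$ and every infinite trace $p=p_0\xrightarrow{\sigma_0}p_1\xrightarrow{\sigma_1}\cdots$ there is an infinite trace $q=q_0\xrightarrow{\sigma_0}q_1\xrightarrow{\sigma_1}\cdots$ with $p_i\in F\Rightarrow q_i\in F$ for all $i$. Its strict part: $p\subset^{\mathrm{di}}q$ iff $p\subseteq^{\mathrm{di}}q$ and not $q\subseteq^{\mathrm{di}}p$. For $P\subseteq\delta\times\delta$, $\mathrm{Prune}(\mathcal A,P)=(\Sigma,Q,I,F,\delta')$ with $\delta'=\{t\in\delta:\nexists t'\in\delta,\ (t,t')\in P\}$ (all dominated transitions are removed simultaneously). For $R_b,R_f\subseteq Q\times Q$, $P(R_b,R_f)=\{((p,\sigma,r),(p',\sigma,r'))\in\delta\times\delta: p\,R_b\,p',\ r\,R_f\,r'\}$; $\mathrm{id}$ is the identity relation.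 $P$ is good for pruning if the pruned automaton has the same language as $\mathcal A$. *)

theory Defs
  imports Main
begin

record ('a, 'q) nba =
  alphabet :: "'a set"
  states :: "'q set"
  initial :: "'q set"
  accepting :: "'q set"
  delta :: "('q \<times> 'a \<times> 'q) set"

definition nba_wf :: "('a, 'q) nba \<Rightarrow> bool" where
  "nba_wf A \<longleftrightarrow>
     finite (alphabet A) \<and> finite (states A) \<and>
     initial A \<subseteq> states A \<and> accepting A \<subseteq> states A \<and>
     delta A \<subseteq> states A \<times> alphabet A \<times> states A"

definition forward_complete :: "('a, 'q) nba \<Rightarrow> bool" where
  "forward_complete A \<longleftrightarrow>
     (\<forall>q \<in> states A. \<forall>a \<in> alphabet A. \<exists>q'. (q, a, q') \<in> delta A)"

definition backward_complete :: "('a, 'q) nba \<Rightarrow> bool" where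
  "backward_complete A \<longleftrightarrow>
     (\<forall>q \<in> states A. \<forall>a \<in> alphabet A. \<exists>q'. (q', a, q) \<in> delta A)"

definition inf_trace :: "('a, 'q) nba \<Rightarrow> (nat \<Rightarrow> 'a) \<Rightarrow> (nat \<Rightarrow> 'q) \<Rightarrow> bool" where
  "inf_trace A w r \<longleftrightarrow> (\<forall>i. (r i, w i, r (Suc i)) \<in> delta A)"

definition fair :: "('a, 'q) nba \<Rightarrow> (nat \<Rightarrow> 'q) \<Rightarrow> bool" where
  "fair A r \<longleftrightarrow> (\<exists>\<^sub>\<infinity> i. r i \<in> accepting A)"

definition language :: "('a, 'q) nba \<Rightarrow> (nat \<Rightarrow> 'a) set" where
  "language A = {w. (\<forall>i. w i \<in> alphabet A) \<and>
     (\<exists>r. r 0 \<in> initial A \<and> inf_trace A w r \<and> fair A r)}"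

definition di_incl :: "('a, 'q) nba \<Rightarrow> 'q \<Rightarrow> 'q \<Rightarrow> bool" where
  "di_incl A p q \<longleftrightarrow>
     (\<forall>w r. inf_trace A w r \<and> r 0 = p \<longrightarrow>
        (\<exists>r'. inf_trace A w r' \<and> r' 0 = q \<and>
              (\<forall>i. r i \<in> accepting A \<longrightarrow> r' i \<in> accepting A)))"

definition di_rel :: "('a, 'q) nba \<Rightarrow> ('q \<times> 'q) set" where
  "di_rel A = {(p, q). p \<in> states A \<and> q \<in> states A \<and> di_incl A p q}"

definition strict_di_rel :: "('a, 'q) nba \<Rightarrow> ('q \<times> 'q) set" where
  "strict_di_rel A = {(p, q). (p, q) \<in> di_rel A \<and> (q, p) \<notin> di_rel A}"

definition prune :: "('a, 'q) nba \<Rightarrow> (('q \<times> 'a \<times> 'q) \<times> ('q \<times> 'a \<times> 'q)) set \<Rightarrow> ('a, 'q) nba" where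
  "prune A P = A\<lparr> delta := {t \<in> delta A. \<not> (\<exists>t' \<in> delta A. (t, t') \<in> P)} \<rparr>"

definition Prel :: "('a, 'q) nba \<Rightarrow> ('q \<times> 'q) set \<Rightarrow> ('q \<times> 'q) set
    \<Rightarrow> (('q \<times> 'a \<times> 'q) \<times> ('q \<times> 'a \<times> 'q)) set" where
  "Prel A Rb Rf = {((p, a, r), (p', a', r')).
      (p, a, r) \<in> delta A \<and> (p', a', r') \<in> delta A \<and> a = a' \<and>
      (p, p') \<in> Rb \<and> (r, r') \<in> Rf}"

definition good_for_pruning :: "('a, 'q) nba \<Rightarrow> (('q \<times> 'a \<times> 'q) \<times> ('q \<times> 'a \<times> 'q)) set \<Rightarrow> bool" where
  "good_for_pruning A P \<longleftrightarrow> language (prune A P) = language A"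

end

theory Submission
  imports Defs
begin

lemma prune_simps[simp]:
  "alphabet (prune A P) = alphabet A" "initial (prune A P) = initial A"
  "accepting (prune A P) = accepting A" "states (prune A P) = states A"
  "delta (prune A P) = {t \<in> delta A. \<not> (\<exists>t' \<in> delta A. (t, t') \<in> P)}"
  by (simp_all add: prune_def)

lemma main:
  assumes fin: "finite (states A)" and dsub: "delta A \<subseteq> states A \<times> alphabet A \<times> states A"
  and irr: "irrefl R" and tr: "trans R" and sub: "R \<subseteq> di_rel A"
  and run: "inf_trace A w r"
  shows "\<exists>r'. r' 0 = r 0 \<and> inf_trace (prune A (Prel A Id R)) w r'
           \<and> (\<forall>i. r i \<in> accepting A \<longrightarrow> r' i \<in> accepting A)"
proof -
  define D where "D i q \<longleftrightarrow> (\<exists>t. (\<forall>k. (t k, w (k+i), t (Suc k)) \<in> delta A) \<and> t 0 = q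
       \<and> (\<forall>k. r (k+i) \<in> accepting A \<longrightarrow> t k \<in> accepting A))" for i q
  define C where "C i q = {s. (q, w i, s) \<in> delta A \<and> D (Suc i) s}" for i q
  define nxt where "nxt i q = (SOME s. s \<in> C i q \<and> (\<forall>s'\<in>C i q. (s,s') \<notin> R))" for i q
  have acR: "acyclic R" using irr tr by (simp add: acyclic_def trancl_id irrefl_def)
  have ex: "\<exists>s. s \<in> C i q \<and> (\<forall>s'\<in>C i q. (s,s') \<notin> R)" if "D i q" for i q
  proof -
    from that obtain t where t: "\<forall>k. (t k, w (k+i), t (Suc k)) \<in> delta A" "t 0 = q"
       "\<forall>k. r (k+i) \<in> accepting A \<longrightarrow> t k \<in> accepting A" unfolding D_def by blast
    have "D (Suc i) (t 1)" unfolding D_def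
    proof (intro exI[of _ "\<lambda>k. t (Suc k)"] conjI allI impI)
      fix k show "(t (Suc k), w (k + Suc i), t (Suc (Suc k))) \<in> delta A"
        using t(1)[rule_format, of "Suc k"] by simp
    next
      fix k assume "r (k + Suc i) \<in> accepting A" then show "t (Suc k) \<in> accepting A"
        using t(3)[rule_format, of "Suc k"] by simp
    qed simp
    moreover have "(q, w i, t 1) \<in> delta A" using t(1)[rule_format, of 0] t(2) by simp
    ultimately have mem: "t 1 \<in> C i q" unfolding C_def by simp
    have "C i q \<subseteq> states A" using dsub unfolding C_def by blast
    hence finC: "finite (C i q)" using fin finite_subset by blast
    have "wf (converse (R \<inter> C i q \<times> C i q))"
      apply (rule finite_acyclic_wf)
       apply (simp add: finC)
      apply (simp add: acyclic_converse)
      using acR acyclic_subset by blast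
    from wfE_min[OF this mem] obtain z where "z \<in> C i q"
      "\<And>y. (y, z) \<in> converse (R \<inter> C i q \<times> C i q) \<Longrightarrow> y \<notin> C i q" by blast
    then show ?thesis by blast
  qed
  have keep: "(q, w i, s) \<in> delta (prune A (Prel A Id R))"
    if s: "s \<in> C i q" and mx: "\<forall>s'\<in>C i q. (s,s') \<notin> R" for i q s
  proof -
    have "s' \<in> C i q" if d: "(q, w i, s') \<in> delta A" and ss: "(s, s') \<in> R" for s'
    proof -
      from s obtain t where t: "\<forall>k. (t k, w (k+Suc i), t (Suc k)) \<in> delta A" "t 0 = s"
         "\<forall>k. r (k+Suc i) \<in> accepting A \<longrightarrow> t k \<in> accepting A" unfolding C_def D_def by blast
      have "di_incl A s s'" using ss sub unfolding di_rel_def by blast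
      moreover have "inf_trace A (\<lambda>k. w (k + Suc i)) t" using t(1) unfolding inf_trace_def by simp
      ultimately obtain t' where t': "inf_trace A (\<lambda>k. w (k + Suc i)) t'" "t' 0 = s'"
        "\<forall>k. t k \<in> accepting A \<longrightarrow> t' k \<in> accepting A"
        using t(2) unfolding di_incl_def by blast
      have "D (Suc i) s'" unfolding D_def using t' t(3) unfolding inf_trace_def by blast
      then show ?thesis using d unfolding C_def by simp
    qed
    then show ?thesis using s mx unfolding C_def Prel_def by auto
  qed
  define qq where "qq = rec_nat (r 0) (\<lambda>i x. nxt i x)"
  have qS: "qq (Suc i) = nxt i (qq i)" for i by (simp add: qq_def)
  have q0: "qq 0 = r 0" by (simp add: qq_def)
  have Dq: "D i (qq i)" for i
  proof (induction i)
    case 0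
    show ?case unfolding D_def q0 using run unfolding inf_trace_def by (intro exI[of _ r]) simp
  next
    case (Suc i)
    from someI_ex[OF ex[OF Suc]] have "nxt i (qq i) \<in> C i (qq i)" unfolding nxt_def by blast
    then show ?case unfolding qS C_def by simp
  qed
  have "inf_trace (prune A (Prel A Id R)) w qq" unfolding inf_trace_def
  proof
    fix i
    from someI_ex[OF ex[OF Dq[of i]]] have "nxt i (qq i) \<in> C i (qq i) \<and>
      (\<forall>s'\<in>C i (qq i). (nxt i (qq i),s') \<notin> R)" unfolding nxt_def by blast
    then show "(qq i, w i, qq (Suc i)) \<in> delta (prune A (Prel A Id R))"
      unfolding qS using keep by blast
  qed
  moreover have "r i \<in> accepting A \<longrightarrow> qq i \<in> accepting A" for i
  proof -
    obtain t where "t 0 = qq i" "\<forall>k. r (k+i) \<in> accepting A \<longrightarrow> t k \<in> accepting A"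
      using Dq[of i] unfolding D_def by blast
    then show ?thesis by (metis add_0)
  qed
  ultimately show ?thesis using q0 by blast
qed

lemma good:
  assumes wf: "nba_wf A" and irr: "irrefl R" and tr: "trans R" and sub: "R \<subseteq> di_rel A"
  shows "good_for_pruning A (Prel A Id R)"
  unfolding good_for_pruning_def
proof
  show "language (prune A (Prel A Id R)) \<subseteq> language A"
    unfolding language_def inf_trace_def fair_def by auto
next
  show "language A \<subseteq> language (prune A (Prel A Id R))"
  proof
    fix w assume "w \<in> language A"
    then obtain r where r: "\<forall>i. w i \<in> alphabet A" "r 0 \<in> initial A" "inf_trace A w r" "fair A r"
      unfolding language_def by blast
    from main[OF _ _ irr tr sub r(3)] wf obtain r' where r': "r' 0 = r 0"
      "inf_trace (prune A (Prel A Id R)) w r'" "\<forall>i. r i \<in> accepting A \<longrightarrow> r' i \<in> accepting A"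
      unfolding nba_wf_def by blast
    have fr: "fair (prune A (Prel A Id R)) r'" using r(4) r'(3) unfolding fair_def
      by (auto elim: frequently_elim1)
    then show "w \<in> language (prune A (Prel A Id R))"
      unfolding language_def mem_Collect_eq prune_simps(1,2)
    proof (intro conjI exI[of _ r'])
      show "\<forall>i. w i \<in> alphabet A" using r(1) .
      show "r' 0 \<in> initial A" using r(2) r'(1) by simp
      show "inf_trace (prune A (Prel A Id R)) w r'" using r'(2) .
      show "fair (prune A (Prel A Id R)) r'" using fr .
    qed
  qed
qed

lemma di_trans: assumes pq: "di_incl A p q" and qs: "di_incl A q s" shows "di_incl A p s"
  unfolding di_incl_def
proof (intro allI impI)
  fix w r assume a: "inf_trace A w r \<and> r 0 = p"
  then obtain r1 where r1: "inf_trace A w r1" "r1 0 = q" "\<forall>i. r i \<in> accepting A \<longrightarrow> r1 i \<in> accepting A"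
    using pq unfolding di_incl_def by blast
  then obtain r2 where r2: "inf_trace A w r2" "r2 0 = s" "\<forall>i. r1 i \<in> accepting A \<longrightarrow> r2 i \<in> accepting A"
    using qs unfolding di_incl_def by blast
  show "\<exists>r'. inf_trace A w r' \<and> r' 0 = s \<and> (\<forall>i. r i \<in> accepting A \<longrightarrow> r' i \<in> accepting A)"
    using r1 r2 by blast
qed

theorem theorem5p1:
  fixes A :: "('a, 'q) nba"
  assumes "nba_wf A" and "forward_complete A" and "backward_complete A"
  shows "(\<forall>R. irrefl R \<and> trans R \<and> R \<subseteq> di_rel A
            \<longrightarrow> good_for_pruning A (Prel A Id R))
         \<and> good_for_pruning A (Prel A Id (strict_di_rel A))"
proof -
  have T: "trans (di_rel A)" unfolding di_rel_def by (auto intro!: transI intro: di_trans)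
  have "irrefl (strict_di_rel A)" unfolding irrefl_def strict_di_rel_def by blast
  moreover have "trans (strict_di_rel A)"
  proof (rule transI)
    fix x y z assume "(x,y) \<in> strict_di_rel A" "(y,z) \<in> strict_di_rel A"
    then show "(x,z) \<in> strict_di_rel A" using T unfolding strict_di_rel_def
      by (auto dest: transD)
  qed
  moreover have "strict_di_rel A \<subseteq> di_rel A" unfolding strict_di_rel_def by blast
  ultimately show ?thesis using good[OF assms(1)] by blast
qed

end
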